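(* For the games $\mathcal G$ and $\mathcal G^{\rm sm}$: (a) a GNE of $\mathcal G$ always exists; (b) a GNE of $\mathcal G^{\rm sm}$ exists provided $\mathcal P\neq\emptyset$; (c) if $\mathbf x^\star$ is a GNE of $\mathcal G$ satisfying constraint (C$_q$) for all $q=1,\dots,Q$, then $\mathbf x^\star$ is a GNE of $\mathcal G^{\rm sm}$; (d) if $\mathbf x^\star$ is a GNE of $\mathcal G^{\rm sm}$, then $\mathbf x^\star$ is a GNE of $\mathcal G$.
   Context: Fix integers $Q,J\ge1$, noise power $\sigma^2>0$, budgets $P_q>0$ ($q=1,\dots,Q$) and $P^{J}_j>0$ ($j=1,\dots,J$), and positive channel gains $H^{SD}_{qq},H^{SE}_{qe},H^{JD}_{jq},H^{JE}_{je}$. Variables: $p_q\ge0$ (power of source $q$) and $p^J_{jq}\ge0$ (power of jammer $j$ on the channel of user $q$); $\mathbf p^J_q=(p^J_{jq})_{j=1}^J$, $\mathbf x_q=(p_q,\mathbf p^J_q)$, $\mathbf x=(\mathbf x_q)_{q=1}^Q$, $\mathbf p^J_{-q}=(\mathbf p^J_r)_{r\ne q}$. Define $r_{qq}(\mathbf x_q)=\log\big(1+\frac{H^{SD}_{qq}p_q}{\sigma^2+\sum_jH^{JD}_{jq}p^J_{jq}}\big)$, $r_{qe}(\mathbf x_q)=\log\big(1+\frac{H^{SE}_{qe}p_q}{\sigma^2+\sum_jH^{JE}_{je}p^J_{jq}}\big)$, $\tilde r^s_q=r_{qq}-r_{qe}$, $r^s_q=\max(0,\tilde r^s_q)$. Constraint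 (C$_q$): $\sum_{j=1}^J(H^{SD}_{qq}H^{JE}_{je}-H^{SE}_{qe}H^{JD}_{jq})p^J_{jq}+(H^{SD}_{qq}-H^{SE}_{qe})\sigma^2\ge0$. $\mathcal P_q(\mathbf p^J_{-q})=\{\mathbf x_q\ge\mathbf 0: p_q\le P_q,\ \sum_{r=1}^Qp^J_{jr}\le P^J_j\ \forall j\}$ (with $p^J_{jr}$, $r\neq q$, fixed by $\mathbf p^J_{-q}$); $\mathcal P^{\rm sm}_q(\mathbf p^J_{-q})=\{\mathbf x_q\in\mathcal P_q(\mathbf p^J_{-q}):\text{(C}_q\text{) holds}\}$; $\mathcal P=\{\mathbf x\ge\mathbf 0: p_q\le P_q \text{ and (C}_q\text{) for all }q,\ \sum_{r}p^J_{jr}\le P^J_j\ \forall j\}$. Game $\mathcal G$: player $q$ maximizes $r^s_q(\mathbf x_q)$ over $\mathbf x_q\in\mathcal P_q(\mathbf p^J_{-q})$; game $\mathcal G^{\rm sm}$: player $q$ maximizes $\tilde r^s_q(\mathbf x_q)$ over $\mathcal P^{\rm sm}_q(\mathbf p^J_{-q})$. A GNE of $\mathcal G$ is $\mathbf x^\star$ such that for all $q$: $\mathbf x^\star_q\in\mathcal P_q(\mathbf p^{J\star}_{-q})$ and $r^s_q(\mathbf x^\star_q)\ge r^s_q(\mathbf x_q)$ for all $\mathbf x_q\in\mathcal P_q(\mathbf p^{J\star}_{-q})$. A GNE of $\mathcal G^{\rm sm}$ is defined analogously with $\tilde r^s_q$ and $\mathcal P^{\rm sm}_q$. *)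

theory Defs
  imports Complex_Main
begin

text \<open>Users q range over 0..<nQ, jammers j over 0..<nJ
 (0-based renaming of 1..Q, 1..J). HSE q stands for H^SE_{qe}, HJE j for H^JE_{je}
 (single eavesdropper e), HSD q for H^SD_{qq}, HJD j q for H^JD_{jq}.\<close>
record params =
  nQ :: nat
  nJ :: nat
  sig2 :: real
  Pmax :: "nat \<Rightarrow> real"
  PJmax :: "nat \<Rightarrow> real"
  HSD :: "nat \<Rightarrow> real"
  HSE :: "nat \<Rightarrow> real"
  HJD :: "nat \<Rightarrow> nat \<Rightarrow> real"
  HJE :: "nat \<Rightarrow> real"

text \<open>A strategy of player q: (p_q, j \<mapsto> p^J_{jq}).
 A profile: (q \<mapsto> p_q, j q \<mapsto> p^J_{jq}).\<close>
type_synonym strat = "real \<times> (nat \<Rightarrow> real)"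
type_synonym profile = "(nat \<Rightarrow> real) \<times> (nat \<Rightarrow> nat \<Rightarrow> real)"

definition strat_of :: "profile \<Rightarrow> nat \<Rightarrow> strat" where
  "strat_of x q = (fst x q, \<lambda>j. snd x j q)"

definition r_qq :: "params \<Rightarrow> nat \<Rightarrow> strat \<Rightarrow> real" where
  "r_qq s q xq = ln (1 + HSD s q * fst xq /
      (sig2 s + (\<Sum>j<nJ s. HJD s j q * snd xq j)))"

definition r_qe :: "params \<Rightarrow> nat \<Rightarrow> strat \<Rightarrow> real" where
  "r_qe s q xq = ln (1 + HSE s q * fst xq /
      (sig2 s + (\<Sum>j<nJ s. HJE s j * snd xq j)))"

definition rs_tilde :: "params \<Rightarrow> nat \<Rightarrow> strat \<Rightarrow> real" where
  "rs_tilde s q xq = r_qq s q xq - r_qe s q xq"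

definition rs :: "params \<Rightarrow> nat \<Rightarrow> strat \<Rightarrow> real" where
  "rs s q xq = max 0 (rs_tilde s q xq)"

definition Cq :: "params \<Rightarrow> nat \<Rightarrow> strat \<Rightarrow> bool" where
  "Cq s q xq \<longleftrightarrow>
     (\<Sum>j<nJ s. (HSD s q * HJE s j - HSE s q * HJD s j q) * snd xq j)
       + (HSD s q - HSE s q) * sig2 s \<ge> 0"

definition Pq :: "params \<Rightarrow> nat \<Rightarrow> (nat \<Rightarrow> nat \<Rightarrow> real) \<Rightarrow> strat \<Rightarrow> bool" where
  "Pq s q pJ xq \<longleftrightarrow>
     0 \<le> fst xq \<and> fst xq \<le> Pmax s q \<and>
     (\<forall>j<nJ s. 0 \<le> snd xq j \<and>
        snd xq j + (\<Sum>r\<in>{..<nQ s} - {q}. pJ j r) \<le> PJmax s j)"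

definition Pq_sm :: "params \<Rightarrow> nat \<Rightarrow> (nat \<Rightarrow> nat \<Rightarrow> real) \<Rightarrow> strat \<Rightarrow> bool" where
  "Pq_sm s q pJ xq \<longleftrightarrow> Pq s q pJ xq \<and> Cq s q xq"

definition Pset :: "params \<Rightarrow> profile set" where
  "Pset s = {x. (\<forall>q<nQ s. 0 \<le> fst x q \<and> fst x q \<le> Pmax s q \<and> Cq s q (strat_of x q)
                       \<and> (\<forall>j<nJ s. 0 \<le> snd x j q)) \<and>
               (\<forall>j<nJ s. (\<Sum>r<nQ s. snd x j r) \<le> PJmax s j)}"

definition GNE :: "params \<Rightarrow> profile \<Rightarrow> bool" where
  "GNE s x \<longleftrightarrow> (\<forall>q<nQ s. Pq s q (snd x) (strat_of x q) \<and>
      (\<forall>xq. Pq s q (snd x) xq \<longrightarrow> rs s q xq \<le> rs s q (strat_of x q)))"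

definition GNE_sm :: "params \<Rightarrow> profile \<Rightarrow> bool" where
  "GNE_sm s x \<longleftrightarrow> (\<forall>q<nQ s. Pq_sm s q (snd x) (strat_of x q) \<and>
      (\<forall>xq. Pq_sm s q (snd x) xq \<longrightarrow> rs_tilde s q xq \<le> rs_tilde s q (strat_of x q)))"

definition valid_params :: "params \<Rightarrow> bool" where
  "valid_params s \<longleftrightarrow> nQ s \<ge> 1 \<and> nJ s \<ge> 1 \<and> sig2 s > 0 \<and>
     (\<forall>q<nQ s. Pmax s q > 0 \<and> HSD s q > 0 \<and> HSE s q > 0) \<and>
     (\<forall>j<nJ s. PJmax s j > 0 \<and> HJE s j > 0 \<and> (\<forall>q<nQ s. HJD s j q > 0))"

end

theory Submission imports Defs "HOL-Analysis.Analysis" begin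

lemma compact_PiE_UNIV:
  assumes "\<And>i. compact (S i :: 'b::topological_space set)"
  shows "compact (PiE UNIV S)"
proof -
  have "compactin (product_topology (\<lambda>i. euclidean) UNIV) (PiE UNIV S)"
    using assms by (simp add: compactin_PiE)
  then show ?thesis by (simp add: euclidean_product_topology)
qed

lemma cfst: "continuous_on S (\<lambda>x::profile. fst x q)"
  by (rule continuous_on_product_then_coordinatewise, intro continuous_intros)

lemma csnd: "continuous_on S (\<lambda>x::profile. snd x j q)"
  by (rule continuous_on_product_then_coordinatewise, rule continuous_on_product_then_coordinatewise, intro continuous_intros)

definition BoxS :: "params \<Rightarrow> profile set" where
  "BoxS s = {x. (\<forall>q. fst x q \<in> (if q < nQ s then {0..Pmax s q} else {0})) \<and>
     (\<forall>j q. snd x j q \<in> (if j < nJ s \<and> q < nQ s then {0..PJmax s j} else {0}))}"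

lemma compact_BoxS: "compact (BoxS s)"
proof -
  have "BoxS s = PiE UNIV (\<lambda>q. if q < nQ s then {0..Pmax s q} else {0}) \<times>
     PiE UNIV (\<lambda>j. PiE UNIV (\<lambda>q. if j < nJ s \<and> q < nQ s then {0..PJmax s j} else {0}))"
    unfolding BoxS_def set_eq_iff mem_Collect_eq mem_Times_iff PiE_iff extensional_UNIV Pi_iff
    by (simp only: ball_UNIV UNIV_I simp_thms)
  then show ?thesis
    by (simp add: compact_Times compact_PiE_UNIV)
qed

definition J0 :: "params \<Rightarrow> profile set" where
  "J0 s = {x. \<forall>j. j < nJ s \<longrightarrow> (\<Sum>r<nQ s. snd x j r) \<le> PJmax s j}"

definition JC :: "params \<Rightarrow> profile set" where
  "JC s = {x. \<forall>q. q < nQ s \<longrightarrow> Cq s q (strat_of x q)}"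

lemma open_const: "open {x. P}"
  by (cases P) auto

lemma closed_J0: "closed (J0 s)"
  unfolding J0_def
  by (intro closed_Collect_all closed_Collect_imp open_const closed_Collect_le continuous_intros csnd)

lemma closed_JC: "closed (JC s)"
  unfolding JC_def Cq_def strat_of_def snd_conv
  by (intro closed_Collect_all closed_Collect_imp open_const closed_Collect_le
      continuous_on_add continuous_on_sum continuous_on_mult continuous_on_const csnd)

lemma den_pos:
  assumes "valid_params s" "q < nQ s" "\<forall>j<nJ s. 0 \<le> f j"
  shows "0 < sig2 s + (\<Sum>j<nJ s. HJD s j q * f j)"
    and "0 < sig2 s + (\<Sum>j<nJ s. HJE s j * f j)"
proof -
  have "0 \<le> (\<Sum>j<nJ s. HJD s j q * f j)"
    using assms unfolding valid_params_def by (intro sum_nonneg mult_nonneg_nonneg) (simp_all add: less_imp_le)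
  then show "0 < sig2 s + (\<Sum>j<nJ s. HJD s j q * f j)" using assms by (simp add: valid_params_def)
  have "0 \<le> (\<Sum>j<nJ s. HJE s j * f j)"
    using assms unfolding valid_params_def by (intro sum_nonneg mult_nonneg_nonneg) (simp_all add: less_imp_le)
  then show "0 < sig2 s + (\<Sum>j<nJ s. HJE s j * f j)" using assms by (simp add: valid_params_def)
qed

lemma arg_pos:
  assumes "0 < (d::real)" "0 \<le> h" "0 \<le> p"
  shows "0 < 1 + h * p / d"
proof -
  have "0 \<le> h * p / d" using assms by simp
  then show ?thesis by linarith
qed

lemma boxD:
  assumes "x \<in> BoxS s" "q < nQ s"
  shows "0 \<le> fst x q" "fst x q \<le> Pmax s q" "\<forall>j<nJ s. 0 \<le> snd x j q"
    "\<forall>j<nJ s. snd x j q \<le> PJmax s j"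
proof -
  have A: "fst x q \<in> {0..Pmax s q}" using assms unfolding BoxS_def by (metis (no_types, lifting) mem_Collect_eq)
  have B: "\<forall>j<nJ s. snd x j q \<in> {0..PJmax s j}" using assms unfolding BoxS_def by (metis (no_types, lifting) mem_Collect_eq)
  show "0 \<le> fst x q" "fst x q \<le> Pmax s q" "\<forall>j<nJ s. 0 \<le> snd x j q"
    "\<forall>j<nJ s. snd x j q \<le> PJmax s j" using A B by auto
qed

lemma cont_rst:
  assumes "valid_params s" "q < nQ s" "K \<subseteq> BoxS s"
  shows "continuous_on K (\<lambda>x. rs_tilde s q (strat_of x q))"
proof -
  have H: "0 \<le> HSD s q" "0 \<le> HSE s q" using assms by (auto simp: valid_params_def)
  have D: "0 < sig2 s + (\<Sum>j<nJ s. HJD s j q * snd x j q)"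
        "0 < sig2 s + (\<Sum>j<nJ s. HJE s j * snd x j q)"
        "0 \<le> fst x q" if x: "x \<in> K" for x
  proof -
    have xb: "x \<in> BoxS s" using x assms(3) by blast
    have "\<forall>j<nJ s. 0 \<le> snd x j q" by (rule boxD(3)[OF xb assms(2)])
    then show "0 < sig2 s + (\<Sum>j<nJ s. HJD s j q * snd x j q)"
        "0 < sig2 s + (\<Sum>j<nJ s. HJE s j * snd x j q)"
      using den_pos[OF assms(1,2)] by auto
    show "0 \<le> fst x q" by (rule boxD(1)[OF xb assms(2)])
  qed
  have N: "\<forall>x\<in>K. sig2 s + (\<Sum>j<nJ s. HJD s j q * snd x j q) \<noteq> 0"
     "\<forall>x\<in>K. sig2 s + (\<Sum>j<nJ s. HJE s j * snd x j q) \<noteq> 0"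
     "\<forall>x\<in>K. 1 + HSD s q * fst x q / (sig2 s + (\<Sum>j<nJ s. HJD s j q * snd x j q)) \<noteq> 0"
     "\<forall>x\<in>K. 1 + HSE s q * fst x q / (sig2 s + (\<Sum>j<nJ s. HJE s j * snd x j q)) \<noteq> 0"
  proof (safe)
    fix x assume x: "x \<in> K"
    note d = D[OF x]
    show "sig2 s + (\<Sum>j<nJ s. HJD s j q * snd x j q) = 0 \<Longrightarrow> False"
      "sig2 s + (\<Sum>j<nJ s. HJE s j * snd x j q) = 0 \<Longrightarrow> False" using d by auto
    have "0 < 1 + HSD s q * fst x q / (sig2 s + (\<Sum>j<nJ s. HJD s j q * snd x j q))"
      by (rule arg_pos[OF d(1) H(1) d(3)])
    then show "1 + HSD s q * fst x q / (sig2 s + (\<Sum>j<nJ s. HJD s j q * snd x j q)) = 0 \<Longrightarrow> False"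
      by simp
    have "0 < 1 + HSE s q * fst x q / (sig2 s + (\<Sum>j<nJ s. HJE s j * snd x j q))"
      by (rule arg_pos[OF d(2) H(2) d(3)])
    then show "1 + HSE s q * fst x q / (sig2 s + (\<Sum>j<nJ s. HJE s j * snd x j q)) = 0 \<Longrightarrow> False"
      by simp
  qed
  show ?thesis
    unfolding rs_tilde_def r_qq_def r_qe_def strat_of_def fst_conv snd_conv
    by (intro continuous_on_diff continuous_on_ln continuous_on_add continuous_on_divide
        continuous_on_mult continuous_on_sum continuous_on_const cfst csnd N)
qed

lemma memBox: "x \<in> BoxS s \<longleftrightarrow>
   (\<forall>q. (q < nQ s \<longrightarrow> 0 \<le> fst x q \<and> fst x q \<le> Pmax s q) \<and> (\<not> q < nQ s \<longrightarrow> fst x q = 0)) \<and>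
   (\<forall>j q. (j < nJ s \<and> q < nQ s \<longrightarrow> 0 \<le> snd x j q \<and> snd x j q \<le> PJmax s j) \<and>
          (\<not> (j < nJ s \<and> q < nQ s) \<longrightarrow> snd x j q = 0))"
  unfolding BoxS_def mem_Collect_eq by (simp only: if_split_mem2 atLeastAtMost_iff singleton_iff)

lemma lin_id:
  "(\<Sum>j<n. ((a::real) * c j - b * d j) * p j) + (a - b) * sg =
     a * (sg + (\<Sum>j<n. c j * p j)) - b * (sg + (\<Sum>j<n. d j * p j))"
  by (simp add: algebra_simps sum_subtractf sum_distrib_left)

lemma core_le:
  fixes a b D E p :: real
  assumes "0 < D" "0 < E" "0 \<le> a" "0 \<le> b" "0 \<le> p" "b * D \<le> a * E"
  shows "ln (1 + b * p / E) \<le> ln (1 + a * p / D)"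
proof -
  have "b / E \<le> a / D" using assms by (simp add: field_simps)
  then have "b / E * p \<le> a / D * p" using assms by (intro mult_right_mono) auto
  then have "b * p / E \<le> a * p / D" by simp
  moreover have "0 < 1 + b * p / E" "0 < 1 + a * p / D" using arg_pos assms by auto
  ultimately show ?thesis by simp
qed

definition Dq where "Dq s q xq = sig2 s + (\<Sum>j<nJ s. HJD s j q * snd xq j)"
definition Eq where "Eq s q xq = sig2 s + (\<Sum>j<nJ s. HJE s j * snd xq j)"

definition feas where "feas s q xq \<longleftrightarrow> q < nQ s \<and> 0 \<le> fst xq \<and> (\<forall>j<nJ s. 0 \<le> snd xq j)"

lemma feas_facts:
  assumes "valid_params s" "feas s q xq"
  shows "0 < Dq s q xq" "0 < Eq s q xq" "0 \<le> HSD s q" "0 \<le> HSE s q" "0 \<le> fst xq"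
    "Cq s q xq \<longleftrightarrow> HSE s q * Dq s q xq \<le> HSD s q * Eq s q xq"
    "rs_tilde s q xq = ln (1 + HSD s q * fst xq / Dq s q xq) - ln (1 + HSE s q * fst xq / Eq s q xq)"
proof -
  show "0 < Dq s q xq" "0 < Eq s q xq" "0 \<le> HSD s q" "0 \<le> HSE s q" "0 \<le> fst xq"
    using assms den_pos[of s q "snd xq"]
    by (auto simp: feas_def Dq_def Eq_def valid_params_def less_imp_le)
  show "Cq s q xq \<longleftrightarrow> HSE s q * Dq s q xq \<le> HSD s q * Eq s q xq"
    unfolding Cq_def lin_id Dq_def Eq_def by linarith
  show "rs_tilde s q xq = ln (1 + HSD s q * fst xq / Dq s q xq) - ln (1 + HSE s q * fst xq / Eq s q xq)"
    by (simp add: rs_tilde_def r_qq_def r_qe_def Dq_def Eq_def)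
qed

lemma Cq_nonneg:
  assumes "valid_params s" "feas s q xq" "Cq s q xq"
  shows "0 \<le> rs_tilde s q xq"
  using feas_facts[OF assms(1,2)] assms(3) core_le[of "Dq s q xq" "Eq s q xq" "HSD s q" "HSE s q" "fst xq"]
  by auto

lemma pos_Cq:
  assumes "valid_params s" "feas s q xq" "0 < rs_tilde s q xq"
  shows "Cq s q xq"
proof (rule ccontr)
  assume "\<not> Cq s q xq"
  then have "HSD s q * Eq s q xq \<le> HSE s q * Dq s q xq" using feas_facts[OF assms(1,2)] by auto
  then have "ln (1 + HSD s q * fst xq / Dq s q xq) \<le> ln (1 + HSE s q * fst xq / Eq s q xq)"
    using feas_facts[OF assms(1,2)] core_le[of "Eq s q xq" "Dq s q xq" "HSE s q" "HSD s q" "fst xq"]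
    by (auto simp: mult.commute)
  then show False using assms(3) feas_facts[OF assms(1,2)] by auto
qed

lemma loc:
  assumes "fst a = fst b" "\<forall>j<nJ s. snd a j = snd b j"
  shows "rs_tilde s q a = rs_tilde s q b" "Cq s q a = Cq s q b" "rs s q a = rs s q b"
proof -
  have S: "(\<Sum>j<nJ s. f j * snd a j) = (\<Sum>j<nJ s. f j * snd b j)" for f
    using assms by (intro sum.cong) auto
  show "rs_tilde s q a = rs_tilde s q b" "Cq s q a = Cq s q b" "rs s q a = rs s q b"
    by (simp_all add: rs_tilde_def r_qq_def r_qe_def Cq_def rs_def S assms(1))
qed

definition upd :: "params \<Rightarrow> profile \<Rightarrow> nat \<Rightarrow> strat \<Rightarrow> profile" where
  "upd s x q xq = ((fst x)(q := fst xq), \<lambda>j. if j < nJ s then (snd x j)(q := snd xq j) else snd x j)"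

lemma strat_upd_other: "r \<noteq> q \<Longrightarrow> strat_of (upd s x q xq) r = strat_of x r"
  by (auto simp: strat_of_def upd_def fun_eq_iff)

lemma strat_upd_same: "strat_of (upd s x q xq) q = (fst xq, \<lambda>j. if j < nJ s then snd xq j else snd x j q)"
  by (auto simp: strat_of_def upd_def fun_eq_iff)

lemma loc_upd:
  "rs_tilde s q (strat_of (upd s x q xq) q) = rs_tilde s q xq"
  "Cq s q (strat_of (upd s x q xq) q) = Cq s q xq"
  "rs s q (strat_of (upd s x q xq) q) = rs s q xq"
  using loc[of "strat_of (upd s x q xq) q" xq s q] by (auto simp: strat_upd_same)

lemma sum_upd:
  assumes "finite A" "q \<in> A"
  shows "(\<Sum>r\<in>A. (f(q := v)) r) = v + (\<Sum>r\<in>A - {q}. (f r :: real))"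
proof -
  have "(\<Sum>r\<in>A. (f(q := v)) r) = v + (\<Sum>r\<in>A - {q}. (f(q := v)) r)"
    using sum.remove[OF assms, of "f(q := v)"] by simp
  also have "(\<Sum>r\<in>A - {q}. (f(q := v)) r) = (\<Sum>r\<in>A - {q}. f r)"
    by (intro sum.cong) auto
  finally show ?thesis .
qed

lemma pot:
  fixes U :: "nat \<Rightarrow> strat \<Rightarrow> real"
  assumes "\<forall>y\<in>K. (\<Sum>r<n. U r (strat_of y r)) \<le> (\<Sum>r<n. U r (strat_of x r))"
    "y \<in> K" "q < n" "\<forall>r<n. r \<noteq> q \<longrightarrow> strat_of y r = strat_of x r"
  shows "U q (strat_of y q) \<le> U q (strat_of x q)"
proof -
  have "(\<Sum>r<n. U r (strat_of y r)) = U q (strat_of y q) + (\<Sum>r\<in>{..<n}-{q}. U r (strat_of y r))"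
    "(\<Sum>r<n. U r (strat_of x r)) = U q (strat_of x q) + (\<Sum>r\<in>{..<n}-{q}. U r (strat_of x r))"
    using assms(3) by (simp_all add: sum.remove)
  moreover have "(\<Sum>r\<in>{..<n}-{q}. U r (strat_of y r)) = (\<Sum>r\<in>{..<n}-{q}. U r (strat_of x r))"
    using assms(4) by (intro sum.cong) auto
  ultimately show ?thesis using assms(1,2) by fastforce
qed

lemma Pq_feas: "q < nQ s \<Longrightarrow> Pq s q pJ xq \<Longrightarrow> feas s q xq"
  by (auto simp: Pq_def feas_def)

lemma x_Pq:
  assumes "x \<in> BoxS s" "x \<in> J0 s" "q < nQ s"
  shows "Pq s q (snd x) (strat_of x q)"
proof -
  have "\<forall>j<nJ s. snd x j q + (\<Sum>r\<in>{..<nQ s} - {q}. snd x j r) \<le> PJmax s j"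
  proof (intro allI impI)
    fix j assume "j < nJ s"
    then have "(\<Sum>r<nQ s. snd x j r) \<le> PJmax s j" using assms(2) by (auto simp: J0_def)
    moreover have "(\<Sum>r<nQ s. snd x j r) = snd x j q + (\<Sum>r\<in>{..<nQ s} - {q}. snd x j r)"
      using assms(3) by (simp add: sum.remove)
    ultimately show "snd x j q + (\<Sum>r\<in>{..<nQ s} - {q}. snd x j r) \<le> PJmax s j" by simp
  qed
  then show ?thesis using assms(1,3) unfolding memBox Pq_def strat_of_def by auto
qed

lemma upd_in:
  assumes "x \<in> BoxS s" "x \<in> J0 s" "q < nQ s" "Pq s q (snd x) xq"
  shows "upd s x q xq \<in> BoxS s" "upd s x q xq \<in> J0 s"
proof -
  have nn: "0 \<le> (\<Sum>r\<in>{..<nQ s} - {q}. snd x j r)" if "j < nJ s" for j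
    using assms(1) that unfolding memBox by (intro sum_nonneg) auto
  have P: "0 \<le> fst xq" "fst xq \<le> Pmax s q" "\<forall>j<nJ s. 0 \<le> snd xq j \<and>
        snd xq j + (\<Sum>r\<in>{..<nQ s} - {q}. snd x j r) \<le> PJmax s j"
    using assms(4) by (auto simp: Pq_def)
  have A: "\<forall>q'. (q' < nQ s \<longrightarrow> 0 \<le> fst (upd s x q xq) q' \<and> fst (upd s x q xq) q' \<le> Pmax s q') \<and>
        (\<not> q' < nQ s \<longrightarrow> fst (upd s x q xq) q' = 0)"
      using assms(1,3) P unfolding memBox by (auto simp: upd_def)
  have B: "\<forall>j q'. (j < nJ s \<and> q' < nQ s \<longrightarrow> 0 \<le> snd (upd s x q xq) j q' \<and> snd (upd s x q xq) j q' \<le> PJmax s j) \<and>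
        (\<not> (j < nJ s \<and> q' < nQ s) \<longrightarrow> snd (upd s x q xq) j q' = 0)"
  proof (intro allI)
    fix j q' show "(j < nJ s \<and> q' < nQ s \<longrightarrow> 0 \<le> snd (upd s x q xq) j q' \<and> snd (upd s x q xq) j q' \<le> PJmax s j) \<and>
        (\<not> (j < nJ s \<and> q' < nQ s) \<longrightarrow> snd (upd s x q xq) j q' = 0)"
    proof (cases "j < nJ s \<and> q' = q")
      case True
      then show ?thesis using P nn[of j] assms(3) by (auto simp: upd_def)
    next
      case False
      then show ?thesis using assms(1) unfolding memBox by (auto simp: upd_def)
    qed
  qed
  show "upd s x q xq \<in> BoxS s" unfolding memBox using A B by blast
  show "upd s x q xq \<in> J0 s"
    unfolding J0_def
  proof (intro CollectI allI impI)
    fix j assume j: "j < nJ s"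
    have "(\<Sum>r<nQ s. snd (upd s x q xq) j r) = snd xq j + (\<Sum>r\<in>{..<nQ s} - {q}. snd x j r)"
    proof -
      have "snd (upd s x q xq) j = (snd x j)(q := snd xq j)" using j by (simp add: upd_def)
      then show ?thesis using assms(3) by (simp only: sum_upd finite_lessThan lessThan_iff)
    qed
    then show "(\<Sum>r<nQ s. snd (upd s x q xq) j r) \<le> PJmax s j" using P j by simp
  qed
qed

lemma upd_JC:
  assumes "x \<in> JC s" "Cq s q xq"
  shows "upd s x q xq \<in> JC s"
  unfolding JC_def
proof (intro CollectI allI impI)
  fix r assume r: "r < nQ s"
  show "Cq s r (strat_of (upd s x q xq) r)"
  proof (cases "r = q")
    case True then show ?thesis using assms(2) by (simp add: loc_upd)
  next
    case False then show ?thesis using assms(1) r by (simp add: strat_upd_other JC_def)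
  qed
qed

lemma part_a:
  assumes "valid_params s"
  shows "\<exists>x. GNE s x"
proof -
  let ?K = "BoxS s \<inter> J0 s"
  let ?F = "\<lambda>x. \<Sum>r<nQ s. rs s r (strat_of x r)"
  have "compact ?K" by (intro compact_Int_closed compact_BoxS closed_J0)
  moreover have "((\<lambda>q. 0), (\<lambda>j q. 0)) \<in> ?K"
    using assms by (auto simp: memBox J0_def valid_params_def less_imp_le)
  then have "?K \<noteq> {}" by blast
  moreover have "continuous_on ?K ?F"
    unfolding rs_def
    by (intro continuous_on_sum continuous_on_max continuous_on_const cont_rst[OF assms]) auto
  ultimately obtain x where x: "x \<in> ?K" "\<forall>y\<in>?K. ?F y \<le> ?F x"
    using continuous_attains_sup[of ?K ?F] by blast
  have "GNE s x"
    unfolding GNE_def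
  proof (intro allI impI conjI)
    fix q assume q: "q < nQ s"
    show "Pq s q (snd x) (strat_of x q)" using x_Pq x q by blast
    show "rs s q xq \<le> rs s q (strat_of x q)" if "Pq s q (snd x) xq" for xq
    proof -
      have "upd s x q xq \<in> ?K" using upd_in[OF _ _ q that] x by blast
      then have "rs s q (strat_of (upd s x q xq) q) \<le> rs s q (strat_of x q)"
        using pot[where K="?K" and n="nQ s" and U="rs s" and x=x and y="upd s x q xq" and q=q] x(2) q by (auto simp: strat_upd_other)
      then show ?thesis by (simp add: loc_upd)
    qed
  qed
  then show ?thesis by blast
qed

lemma part_b:
  assumes "valid_params s" "Pset s \<noteq> {}"
  shows "\<exists>x. GNE_sm s x"
proof -
  let ?K = "BoxS s \<inter> J0 s \<inter> JC s"
  let ?F = "\<lambda>x. \<Sum>r<nQ s. rs_tilde s r (strat_of x r)"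
  have "compact ?K" by (intro compact_Int_closed compact_BoxS closed_J0 closed_JC)
  moreover obtain z where z: "z \<in> Pset s" using assms(2) by blast
  define t where "t = ((\<lambda>q. if q < nQ s then fst z q else 0),
      (\<lambda>j q. if j < nJ s \<and> q < nQ s then snd z j q else 0))"
  have "t \<in> ?K"
  proof (intro IntI)
    have le: "snd z j q \<le> PJmax s j" if "j < nJ s" "q < nQ s" for j q
    proof -
      have "snd z j q \<le> (\<Sum>r<nQ s. snd z j r)"
        using z that by (intro member_le_sum) (auto simp: Pset_def)
      then show ?thesis using z that by (auto simp: Pset_def)
    qed
    show "t \<in> BoxS s" unfolding memBox t_def using z le by (auto simp: Pset_def)
    show "t \<in> J0 s" unfolding J0_def t_def using z by (auto simp: Pset_def)
    show "t \<in> JC s" unfolding JC_def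
    proof (intro CollectI allI impI)
      fix q assume q: "q < nQ s"
      have "Cq s q (strat_of z q)" using z q by (auto simp: Pset_def)
      moreover have "Cq s q (strat_of t q) = Cq s q (strat_of z q)"
        by (rule loc) (auto simp: strat_of_def t_def q)
      ultimately show "Cq s q (strat_of t q)" by simp
    qed
  qed
  then have "?K \<noteq> {}" by blast
  moreover have "continuous_on ?K ?F"
    by (intro continuous_on_sum cont_rst[OF assms(1)]) auto
  ultimately obtain x where x: "x \<in> ?K" "\<forall>y\<in>?K. ?F y \<le> ?F x"
    using continuous_attains_sup[of ?K ?F] by blast
  have "GNE_sm s x"
    unfolding GNE_sm_def
  proof (intro allI impI conjI)
    fix q assume q: "q < nQ s"
    show "Pq_sm s q (snd x) (strat_of x q)" using x_Pq x q by (auto simp: Pq_sm_def JC_def)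
    show "rs_tilde s q xq \<le> rs_tilde s q (strat_of x q)" if "Pq_sm s q (snd x) xq" for xq
    proof -
      have "upd s x q xq \<in> ?K" using upd_in[OF _ _ q, of x xq] upd_JC[of x s q xq] x that
        by (auto simp: Pq_sm_def)
      then have "rs_tilde s q (strat_of (upd s x q xq) q) \<le> rs_tilde s q (strat_of x q)"
        using pot[where K="?K" and n="nQ s" and U="rs_tilde s" and x=x and y="upd s x q xq" and q=q] x(2) q by (auto simp: strat_upd_other)
      then show ?thesis by (simp add: loc_upd)
    qed
  qed
  then show ?thesis by blast
qed

lemma strat_feas: "q < nQ s \<Longrightarrow> Pq s q (snd x) (strat_of x q) \<Longrightarrow> feas s q (strat_of x q)"
  by (rule Pq_feas)

lemma part_c:
  assumes "valid_params s" "GNE s x" "\<forall>q<nQ s. Cq s q (strat_of x q)"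
  shows "GNE_sm s x"
  unfolding GNE_sm_def
proof (intro allI impI conjI)
  fix q assume q: "q < nQ s"
  have P: "Pq s q (snd x) (strat_of x q)" and opt: "\<And>xq. Pq s q (snd x) xq \<Longrightarrow> rs s q xq \<le> rs s q (strat_of x q)"
    using assms(2) q by (auto simp: GNE_def)
  show "Pq_sm s q (snd x) (strat_of x q)" using P assms(3) q by (simp add: Pq_sm_def)
  have n0: "0 \<le> rs_tilde s q (strat_of x q)"
    using Cq_nonneg[OF assms(1) Pq_feas[OF q P]] assms(3) q by blast
  show "rs_tilde s q xq \<le> rs_tilde s q (strat_of x q)" if "Pq_sm s q (snd x) xq" for xq
  proof -
    have "0 \<le> rs_tilde s q xq" using that Cq_nonneg[OF assms(1) Pq_feas[OF q, of "snd x" xq]] by (auto simp: Pq_sm_def)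
    moreover have "rs s q xq \<le> rs s q (strat_of x q)" using opt that by (auto simp: Pq_sm_def)
    ultimately show ?thesis using n0 by (simp add: rs_def)
  qed
qed

lemma part_d:
  assumes "valid_params s" "GNE_sm s x"
  shows "GNE s x"
  unfolding GNE_def
proof (intro allI impI conjI)
  fix q assume q: "q < nQ s"
  have P: "Pq_sm s q (snd x) (strat_of x q)" and
    opt: "\<And>xq. Pq_sm s q (snd x) xq \<Longrightarrow> rs_tilde s q xq \<le> rs_tilde s q (strat_of x q)"
    using assms(2) q by (auto simp: GNE_sm_def)
  show "Pq s q (snd x) (strat_of x q)" using P by (simp add: Pq_sm_def)
  show "rs s q xq \<le> rs s q (strat_of x q)" if "Pq s q (snd x) xq" for xq
  proof (cases "0 < rs_tilde s q xq")
    case True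
    then have "Cq s q xq" using pos_Cq[OF assms(1) Pq_feas[OF q that]] by blast
    then have "rs_tilde s q xq \<le> rs_tilde s q (strat_of x q)" using opt that by (simp add: Pq_sm_def)
    then show ?thesis by (simp add: rs_def)
  next
    case False
    then show ?thesis by (simp add: rs_def)
  qed
qed

theorem proposition1:
  fixes s :: params
  assumes "valid_params s"
  shows "(\<exists>x. GNE s x)
       \<and> (Pset s \<noteq> {} \<longrightarrow> (\<exists>x. GNE_sm s x))
       \<and> (\<forall>x. GNE s x \<and> (\<forall>q<nQ s. Cq s q (strat_of x q)) \<longrightarrow> GNE_sm s x)
       \<and> (\<forall>x. GNE_sm s x \<longrightarrow> GNE s x)"
  using part_a[OF assms] part_b[OF assms] part_c[OF assms] part_d[OF assms] by blast

end
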